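(* Let $\alpha,\gamma\in\mathbb{R}$, $b\in(0,\infty)$ satisfy $\alpha<\gamma$, let $(\Omega,\mathcal{F},\mathbb{P})$ be a probability space, for every $h\in\mathbb{N}$ let $B^h_n\colon\Omega\to\mathbb{R}$, $n\in\{1,\dots,h\}$, and $W^h_n\colon\Omega\to\mathbb{R}$, $n\in\{1,\dots,h\}$, be random variables, and assume for all $h\in\mathbb{N}$, $n\in\{1,\dots,h\}$, $x\in\mathbb{R}$ that $B^h_1,\dots,B^h_h,W^h_1,\dots,W^h_h$ are independent, that $h^\gamma B^h_n$ is standard normal, and that $\mathbb{P}(h^\alpha W^h_n\ge x)=\int_{\max\{x,0\}}^\infty[\tfrac2\pi]^{1/2}\exp(-\tfrac{y^2}{2})\,\mathrm{d}y$. Then for all $h\in\mathbb{N}\cap[(2/(\pi b))^{1/(\gamma-\alpha)},\infty)$ and $\kappa\in\{1,\dots,h\}$ it holds that $$\mathbb{P}\Big(\min_{n\in\{1,\dots,\kappa\}}\big(B^h_n/W^h_n\big)>-b\Big)\ge1-\frac{2\kappa}{\pi b}h^{\alpha-\gamma}.$$ *)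

theory Defs
  imports "HOL-Probability.Probability"
begin

end

theory Submission
  imports Defs
begin

lemma (in prob_space) indep_vars_pair:
  assumes "indep_vars M' X I" "i \<in> I" "j \<in> I" "i \<noteq> j"
  shows "indep_var (M' i) (X i) (M' j) (X j)"
proof -
  have rv: "\<forall>i\<in>I. random_variable (M' i) (X i)" and
    ind: "indep_sets (\<lambda>i. sigma_sets (space M) { X i -` A \<inter> space M | A. A \<in> sets (M' i)}) I"
    using assms(1) unfolding indep_vars_def by auto
  have ev: "\<And>k. k \<in> I \<Longrightarrow> sigma_sets (space M) { X k -` A \<inter> space M | A. A \<in> sets (M' k)} \<subseteq> events"
    using ind unfolding indep_sets_def by auto
  show ?thesis unfolding indep_var_eq indep_sets2_eq
  proof (intro conjI ballI)
    show "random_variable (M' i) (X i)" "random_variable (M' j) (X j)" using rv assms by auto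
    show "sigma_sets (space M) { X i -` A \<inter> space M | A. A \<in> sets (M' i)} \<subseteq> events" using ev assms by auto
    show "sigma_sets (space M) { X j -` A \<inter> space M | A. A \<in> sets (M' j)} \<subseteq> events" using ev assms by auto
    fix a b assume a: "a \<in> sigma_sets (space M) { X i -` A \<inter> space M | A. A \<in> sets (M' i)}"
      and b: "b \<in> sigma_sets (space M) { X j -` A \<inter> space M | A. A \<in> sets (M' j)}"
    have "prob (\<Inter>k\<in>{i,j}. (\<lambda>k. if k = i then a else b) k) = (\<Prod>k\<in>{i,j}. prob ((\<lambda>k. if k = i then a else b) k))"
      by (rule indep_setsD[OF ind]) (use assms a b in auto)
    then show "prob (a \<inter> b) = prob a * prob b" using assms(4) by (auto simp: Int_commute)
  qed
qed


lemma std_abs1: "has_bochner_integral lborel (\<lambda>x. std_normal_density x * \<bar>x\<bar>) (sqrt (2/pi))"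
  using std_normal_moment_abs_odd[of 0] by simp

lemma std_0: "has_bochner_integral lborel (\<lambda>x. std_normal_density x) 1"
  using std_normal_moment_even[of 0] by simp

lemma (in prob_space) key:
  fixes X Y :: "'a \<Rightarrow> real" and k :: real
  assumes ind: "indep_var borel X borel Y"
    and dX: "distributed M lborel X (\<lambda>x. ennreal (std_normal_density x))"
    and hY: "\<And>s. s > 0 \<Longrightarrow> prob {\<omega>\<in>space M. Y \<omega> < s} \<le> sqrt (2/pi) * s"
    and k: "k \<ge> 0"
  shows "prob {\<omega>\<in>space M. Y \<omega> \<le> k * \<bar>X \<omega>\<bar>} \<le> 2 * k / pi"
proof -
  have rX[measurable]: "X \<in> borel_measurable M" and rY[measurable]: "Y \<in> borel_measurable M"
    using indep_var_rv1[OF ind] indep_var_rv2[OF ind] by auto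
  have eq: "distr M borel X \<Otimes>\<^sub>M distr M borel Y = distr M (borel \<Otimes>\<^sub>M borel) (\<lambda>x. (X x, Y x))"
    using ind indep_var_distribution_eq by blast
  interpret PX: prob_space "distr M borel X" by (rule prob_space_distr) simp
  interpret PY: prob_space "distr M borel Y" by (rule prob_space_distr) simp
  define S where "S = {p::real\<times>real. snd p \<le> k * \<bar>fst p\<bar>}"
  have "{p \<in> space (borel \<Otimes>\<^sub>M borel). snd p \<le> k * \<bar>fst p\<bar>} \<in> sets (borel \<Otimes>\<^sub>M (borel::real measure))"
    by measurable
  then have S[measurable]: "S \<in> sets (borel \<Otimes>\<^sub>M borel)" unfolding S_def by (simp add: space_pair_measure)
  then have S': "{p::real\<times>real. snd p \<le> k * \<bar>fst p\<bar>} \<in> sets (borel \<Otimes>\<^sub>M borel)" unfolding S_def .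
  have c: "sqrt (2/pi) * sqrt (2/pi) = 2/pi" by simp
  have sp: "sqrt (2/pi) > 0" by simp
  show ?thesis
  proof (rule field_le_epsilon)
    fix e :: real assume e: "e > 0"
    define d where "d = e / sqrt (2/pi)"
    have d: "d > 0" using e sp unfolding d_def by simp
    have de: "sqrt (2/pi) * d = e" unfolding d_def using sp by simp
    have hb: "has_bochner_integral lborel (\<lambda>x. std_normal_density x * (sqrt (2/pi) * (k * \<bar>x\<bar> + d)))
        (2 * k / pi + e)"
    proof -
      have "has_bochner_integral lborel (\<lambda>x. (sqrt (2/pi) * k) * (std_normal_density x * \<bar>x\<bar>) + (sqrt (2/pi) * d) * std_normal_density x)
        ((sqrt (2/pi) * k) * sqrt (2/pi) + (sqrt (2/pi) * d) * 1)"
        by (intro has_bochner_integral_add has_bochner_integral_mult_right std_abs1 std_0)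
      moreover have "(sqrt (2/pi) * k) * sqrt (2/pi) + (sqrt (2/pi) * d) * 1 = 2 * k / pi + e"
        using c de by (simp add: algebra_simps)
      moreover have "(\<lambda>x. (sqrt (2/pi) * k) * (std_normal_density x * \<bar>x\<bar>) + (sqrt (2/pi) * d) * std_normal_density x)
         = (\<lambda>x. std_normal_density x * (sqrt (2/pi) * (k * \<bar>x\<bar> + d)))"
        by (simp add: fun_eq_iff algebra_simps)
      ultimately show ?thesis by metis
    qed
    have "emeasure M {\<omega>\<in>space M. Y \<omega> \<le> k * \<bar>X \<omega>\<bar>} = emeasure (distr M (borel \<Otimes>\<^sub>M borel) (\<lambda>x. (X x, Y x))) S"
      by (subst emeasure_distr) (auto simp: S_def S' intro!: arg_cong[where f="emeasure M"])
    also have "\<dots> = (\<integral>\<^sup>+x. emeasure (distr M borel Y) (Pair x -` S) \<partial>distr M borel X)"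
      by (simp add: eq[symmetric] PY.emeasure_pair_measure_alt)
    also have "\<dots> \<le> (\<integral>\<^sup>+x. ennreal (sqrt (2/pi) * (k * \<bar>x\<bar> + d)) \<partial>distr M borel X)"
    proof (rule nn_integral_mono)
      fix x
      have "emeasure (distr M borel Y) (Pair x -` S) = emeasure M {\<omega>\<in>space M. Y \<omega> \<le> k*\<bar>x\<bar>}"
        by (subst emeasure_distr) (auto simp: S_def intro!: arg_cong[where f="emeasure M"])
      also have "\<dots> \<le> emeasure M {\<omega>\<in>space M. Y \<omega> < k*\<bar>x\<bar> + d}"
        by (rule emeasure_mono) (use d in auto)
      also have "\<dots> = ennreal (prob {\<omega>\<in>space M. Y \<omega> < k*\<bar>x\<bar> + d})"
        by (simp add: emeasure_eq_measure)
      also have "\<dots> \<le> ennreal (sqrt (2/pi) * (k*\<bar>x\<bar> + d))"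
        proof (intro ennreal_leI hY)
        show "0 < k*\<bar>x\<bar> + d" using d k by (simp add: add_nonneg_pos)
      qed
      finally show "emeasure (distr M borel Y) (Pair x -` S) \<le> ennreal (sqrt (2/pi) * (k * \<bar>x\<bar> + d))" .
    qed
    also have "\<dots> = (\<integral>\<^sup>+\<omega>. ennreal (sqrt (2/pi) * (k * \<bar>X \<omega>\<bar> + d)) \<partial>M)"
      by (simp add: nn_integral_distr)
    also have "\<dots> = (\<integral>\<^sup>+x. ennreal (std_normal_density x) * ennreal (sqrt (2/pi) * (k * \<bar>x\<bar> + d)) \<partial>lborel)"
      by (rule distributed_nn_integral[OF dX, symmetric]) simp
    also have "\<dots> = (\<integral>\<^sup>+x. ennreal (std_normal_density x * (sqrt (2/pi) * (k * \<bar>x\<bar> + d))) \<partial>lborel)"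
      using d k by (intro nn_integral_cong ennreal_mult[symmetric]) (auto simp: normal_density_nonneg)
    also have "\<dots> = ennreal (2 * k / pi + e)"
    proof -
      have "(\<integral>\<^sup>+x. ennreal (std_normal_density x * (sqrt (2/pi) * (k * \<bar>x\<bar> + d))) \<partial>lborel)
          = ennreal (integral\<^sup>L lborel (\<lambda>x. std_normal_density x * (sqrt (2/pi) * (k * \<bar>x\<bar> + d))))"
        using d k by (intro nn_integral_eq_integral integrable.intros[OF hb]) (auto intro!: AE_I2 normal_density_nonneg)
      then show ?thesis using has_bochner_integral_integral_eq[OF hb] by simp
    qed
    finally have "emeasure M {\<omega>\<in>space M. Y \<omega> \<le> k * \<bar>X \<omega>\<bar>} \<le> ennreal (2 * k / pi + e)" .
    then show "prob {\<omega>\<in>space M. Y \<omega> \<le> k * \<bar>X \<omega>\<bar>} \<le> 2 * k / pi + e"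
      proof -
      have "0 \<le> 2 * k / pi + e" using k e by simp
      then show ?thesis using \<open>emeasure M _ \<le> _\<close> unfolding emeasure_eq_measure
        by (subst (asm) ennreal_le_iff) auto
    qed
  qed
qed


lemma g_eq: "sqrt (2 / pi) * exp (- (y\<^sup>2) / 2) = 2 * std_normal_density y"
proof -
  have "sqrt (2/pi) = 2 / sqrt (2 * pi)"
    by (simp add: real_sqrt_divide real_sqrt_mult field_simps)
  then show ?thesis unfolding std_normal_density_def by simp
qed

lemma g_int: "integrable lborel (\<lambda>y. sqrt (2 / pi) * exp (- (y\<^sup>2) / 2))"
proof -
  have "integrable lborel (\<lambda>y. 2 * std_normal_density y)"
    using integrable_std_normal_moment[of 0] by simp
  then show ?thesis by (simp only: g_eq)
qed

lemma g_setint: "A \<in> sets lborel \<Longrightarrow> set_integrable lborel A (\<lambda>y. sqrt (2 / pi) * exp (- (y\<^sup>2) / 2))"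
  unfolding set_integrable_def by (intro integrable_mult_indicator g_int)

lemma (in prob_space) halfnormal_cdf:
  fixes Y :: "'a \<Rightarrow> real"
  assumes [measurable]: "Y \<in> borel_measurable M"
    and H: "\<And>x. prob {\<omega>\<in>space M. Y \<omega> \<ge> x} = (LBINT y:{max x 0..}. sqrt (2 / pi) * exp (- (y\<^sup>2) / 2))"
    and s: "s > 0"
  shows "prob {\<omega>\<in>space M. Y \<omega> < s} \<le> sqrt (2/pi) * s"
proof -
  define g where "g = (\<lambda>y::real. sqrt (2 / pi) * exp (- (y\<^sup>2) / 2))"
  define A where "A = (\<lambda>n::nat. {\<omega>\<in>space M. Y \<omega> \<ge> - real n})"
  have "(\<lambda>n. prob (A n)) \<longlonglongrightarrow> prob (\<Union>n. A n)"
    by (rule finite_Lim_measure_incseq) (auto simp: A_def incseq_def)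
  moreover have "(\<Union>n. A n) = space M"
  proof (auto simp: A_def)
    fix x assume "x \<in> space M"
    obtain n :: nat where "real n \<ge> - Y x" using real_arch_simple by blast
    then show "\<exists>n. - real n \<le> Y x" by (intro exI[of _ n]) simp
  qed
  moreover have "prob (A n) = (LBINT y:{0..}. g y)" for n
    unfolding A_def H g_def by simp
  ultimately have "(\<lambda>n. (LBINT y:{0..}. g y)) \<longlonglongrightarrow> 1" using prob_space by simp
  then have G0: "(LBINT y:{0..}. g y) = 1" by (rule LIMSEQ_unique[OF tendsto_const])
  have "(LBINT y:{0..}. g y) = (LBINT y:{0..<s}. g y) + (LBINT y:{s..}. g y)"
  proof -
    have "{0..} = {0..<s} \<union> {s..}" using s by auto
    moreover have i1: "set_integrable lborel {0..<s} g" unfolding g_def by (rule g_setint) simp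
    moreover have i2: "set_integrable lborel {s..} g" unfolding g_def by (rule g_setint) simp
    moreover have D: "{0..<s} \<inter> {s..} = {}" by auto
    ultimately show ?thesis using set_integral_Un[OF D i1 i2] by simp
  qed
  moreover have "(LBINT y:{0..<s}. g y) \<le> sqrt (2/pi) * s"
  proof -
    have "(LBINT y:{0..<s}. g y) = integral\<^sup>L lborel (\<lambda>y. indicator {0..<s} y * g y)"
      by (simp add: set_lebesgue_integral_def)
    also have "\<dots> \<le> integral\<^sup>L lborel (\<lambda>y. sqrt (2/pi) * indicator {0..<s} y)"
    proof (rule integral_mono)
      show "integrable lborel (\<lambda>y. indicator {0..<s} y * g y)"
        using g_setint[of "{0..<s}"] unfolding g_def set_integrable_def by simp
      show "integrable lborel (\<lambda>y. sqrt (2/pi) * indicator {0..<s} y :: real)"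
        using s by (intro integrable_mult_right integrable_real_indicator) (auto simp: emeasure_lborel_Ico)
      fix y show "indicator {0..<s} y * g y \<le> sqrt (2/pi) * indicator {0..<s} y"
        by (auto simp: g_def indicator_def)
    qed
    also have "\<dots> = sqrt (2/pi) * s" using s by simp
    finally show ?thesis .
  qed
  moreover have "prob {\<omega>\<in>space M. Y \<omega> < s} = 1 - prob {\<omega>\<in>space M. Y \<omega> \<ge> s}"
  proof -
    have "{\<omega>\<in>space M. Y \<omega> < s} = space M - {\<omega>\<in>space M. Y \<omega> \<ge> s}" by auto
    then show ?thesis by (simp add: prob_compl)
  qed
  moreover have "prob {\<omega>\<in>space M. Y \<omega> \<ge> s} = (LBINT y:{s..}. g y)"
    unfolding H g_def using s by simp
  ultimately show ?thesis using G0 by linarith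
qed

lemma le_event:
  fixes f g :: "'a \<Rightarrow> real"
  assumes [measurable]: "f \<in> borel_measurable M" "g \<in> borel_measurable M"
  shows "{\<omega>\<in>space M. f \<omega> \<le> c * \<bar>g \<omega>\<bar>} \<in> sets M"
  by measurable

lemma ratio_ineq:
  fixes p b \<beta> w \<alpha> \<gamma> :: real
  assumes b: "b > 0" and p: "p > 0" and r: "\<beta> / w \<le> - b"
  shows "p powr \<alpha> * w \<le> (p powr (\<alpha> - \<gamma>) / b) * \<bar>p powr \<gamma> * \<beta>\<bar>"
proof -
  have w: "w \<noteq> 0" using r b by auto
  have "\<bar>\<beta> / w\<bar> \<ge> b" using r b by linarith
  then have "\<bar>\<beta>\<bar> \<ge> b * \<bar>w\<bar>" using w by (simp add: abs_divide field_simps)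
  then have aw: "\<bar>w\<bar> \<le> \<bar>\<beta>\<bar> / b" using b by (simp add: field_simps)
  have "p powr \<alpha> * w \<le> p powr \<alpha> * \<bar>w\<bar>" using p by (intro mult_left_mono) auto
  also have "\<dots> \<le> p powr \<alpha> * (\<bar>\<beta>\<bar> / b)" using aw p by (intro mult_left_mono) auto
  also have "\<dots> = (p powr (\<alpha> - \<gamma>) / b) * \<bar>p powr \<gamma> * \<beta>\<bar>"
    using p b by (simp add: powr_diff abs_mult field_simps)
  finally show ?thesis .
qed

theorem lemma3p16:
  fixes M :: "'a measure"
    and \<alpha> \<gamma> b :: real
    and B W :: "nat \<Rightarrow> nat \<Rightarrow> 'a \<Rightarrow> real"
  assumes "\<alpha> < \<gamma>" and "b > 0"
    and "prob_space M"
    and indep: "\<And>h. h \<ge> 1 \<Longrightarrow> prob_space.indep_vars M (\<lambda>_. borel)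
              (\<lambda>i. case i of Inl n \<Rightarrow> B h n | Inr n \<Rightarrow> W h n) ({1..h} <+> {1..h})"
    and Bnormal: "\<And>h n. h \<ge> 1 \<Longrightarrow> n \<in> {1..h} \<Longrightarrow>
              distributed M lborel (\<lambda>\<omega>. real h powr \<gamma> * B h n \<omega>) (\<lambda>x. ennreal (std_normal_density x))"
    and Whalf: "\<And>h n x. h \<ge> 1 \<Longrightarrow> n \<in> {1..h} \<Longrightarrow>
              measure M {\<omega> \<in> space M. real h powr \<alpha> * W h n \<omega> \<ge> x}
                = (LBINT y:{max x 0..}. sqrt (2 / pi) * exp (- (y\<^sup>2) / 2))"
  shows "\<And>h \<kappa>. h \<ge> 1 \<Longrightarrow> real h \<ge> (2 / (pi * b)) powr (1 / (\<gamma> - \<alpha>)) \<Longrightarrow> \<kappa> \<in> {1..h} \<Longrightarrow>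
           measure M {\<omega> \<in> space M. Min ((\<lambda>n. B h n \<omega> / W h n \<omega>) ` {1..\<kappa>}) > - b}
             \<ge> 1 - 2 * real \<kappa> / (pi * b) * real h powr (\<alpha> - \<gamma>)"
proof -
  interpret prob_space M by fact
  fix h \<kappa> :: nat
  assume h1: "h \<ge> 1" and kap: "\<kappa> \<in> {1..h}"
  define c where "c = real h powr (\<alpha> - \<gamma>) / b"
  have hpos: "real h > 0" using h1 by simp
  have c0: "c \<ge> 0" unfolding c_def using \<open>b > 0\<close> by simp
  define E where "E = (\<lambda>n. {\<omega>\<in>space M. B h n \<omega> / W h n \<omega> \<le> - b})"
  have iv: "indep_var borel (B h n) borel (W h n)" if n: "n \<in> {1..h}" for n
  proof -
    have i1: "Inl n \<in> {1..h} <+> {1..h}" using n by (rule InlI)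
    have i2: "Inr n \<in> {1..h} <+> {1..h}" using n by (rule InrI)
    show ?thesis using indep_vars_pair[OF indep[OF h1] i1 i2] by simp
  qed
  have Eev: "E n \<in> events" if n: "n \<in> {1..h}" for n
  proof -
    have "B h n \<in> borel_measurable M" "W h n \<in> borel_measurable M"
      using indep_var_rv1[OF iv[OF n]] indep_var_rv2[OF iv[OF n]] by auto
    then have f: "(\<lambda>\<omega>. B h n \<omega> / W h n \<omega>) \<in> borel_measurable M"
      by (rule borel_measurable_divide)
    have "E n = (\<lambda>\<omega>. B h n \<omega> / W h n \<omega>) -` {..- b} \<inter> space M" unfolding E_def by auto
    then show ?thesis using measurable_sets[OF f, of "{..- b}"] by simp
  qed
  have Eb: "prob (E n) \<le> 2 * c / pi" if n: "n \<in> {1..h}" for n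
  proof -
    have iv2: "indep_var borel (\<lambda>\<omega>. real h powr \<gamma> * B h n \<omega>) borel (\<lambda>\<omega>. real h powr \<alpha> * W h n \<omega>)"
    proof -
      have m1: "(\<lambda>x::real. real h powr \<gamma> * x) \<in> borel_measurable borel" by measurable
      have m2: "(\<lambda>x::real. real h powr \<alpha> * x) \<in> borel_measurable borel" by measurable
      from indep_var_compose[OF iv[OF n] m1 m2] show ?thesis by (simp only: o_def)
    qed
    have rY: "(\<lambda>\<omega>. real h powr \<alpha> * W h n \<omega>) \<in> borel_measurable M"
      by (rule indep_var_rv2[OF iv2])
    have rX: "(\<lambda>\<omega>. real h powr \<gamma> * B h n \<omega>) \<in> borel_measurable M"
      by (rule indep_var_rv1[OF iv2])
    have hY: "prob {\<omega>\<in>space M. real h powr \<alpha> * W h n \<omega> < s} \<le> sqrt (2/pi) * s" if s: "s > 0" for s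
      by (rule halfnormal_cdf[OF rY Whalf[OF h1 n] s])
    have K: "prob {\<omega>\<in>space M. real h powr \<alpha> * W h n \<omega> \<le> c * \<bar>real h powr \<gamma> * B h n \<omega>\<bar>} \<le> 2 * c / pi"
      by (rule key[OF iv2 Bnormal[OF h1 n] hY c0])
    have sub: "E n \<subseteq> {\<omega>\<in>space M. real h powr \<alpha> * W h n \<omega> \<le> c * \<bar>real h powr \<gamma> * B h n \<omega>\<bar>}"
      unfolding E_def c_def using ratio_ineq[OF \<open>b > 0\<close> hpos] by auto
    have ev2: "{\<omega>\<in>space M. real h powr \<alpha> * W h n \<omega> \<le> c * \<bar>real h powr \<gamma> * B h n \<omega>\<bar>} \<in> events"
      by (rule le_event[OF rY rX])
    have "prob (E n) \<le> prob {\<omega>\<in>space M. real h powr \<alpha> * W h n \<omega> \<le> c * \<bar>real h powr \<gamma> * B h n \<omega>\<bar>}"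
      by (rule finite_measure_mono[OF sub ev2])
    with K show ?thesis by linarith
  qed
  have kh: "{1..\<kappa>} \<subseteq> {1..h}" using kap by auto
  have ne: "{1..\<kappa>} \<noteq> {}" using kap by auto
  have seteq: "{\<omega> \<in> space M. Min ((\<lambda>n. B h n \<omega> / W h n \<omega>) ` {1..\<kappa>}) > - b}
      = space M - (\<Union>n\<in>{1..\<kappa>}. E n)"
    using ne by (auto simp: E_def Min_gr_iff)
  have Uev: "(\<Union>n\<in>{1..\<kappa>}. E n) \<in> events" using Eev kh by auto
  have "prob (\<Union>n\<in>{1..\<kappa>}. E n) \<le> (\<Sum>n\<in>{1..\<kappa>}. prob (E n))"
    using Eev kh by (intro finite_measure_subadditive_finite) auto
  also have "\<dots> \<le> (\<Sum>n\<in>{1..\<kappa>}. 2 * c / pi)"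
    using Eb kh by (intro sum_mono) auto
  also have "\<dots> = real \<kappa> * (2 * c / pi)" by simp
  finally have U: "prob (\<Union>n\<in>{1..\<kappa>}. E n) \<le> real \<kappa> * (2 * c / pi)" .
  have "real \<kappa> * (2 * c / pi) = 2 * real \<kappa> / (pi * b) * real h powr (\<alpha> - \<gamma>)"
    unfolding c_def by (simp add: field_simps)
  then show "measure M {\<omega> \<in> space M. Min ((\<lambda>n. B h n \<omega> / W h n \<omega>) ` {1..\<kappa>}) > - b}
             \<ge> 1 - 2 * real \<kappa> / (pi * b) * real h powr (\<alpha> - \<gamma>)"
    using U unfolding seteq prob_compl[OF Uev] by linarith
qed

end
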